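(* Let $n\ge 4$ be an integer and let $\Lambda_n$ denote the Lebesgue constant of Lagrange interpolation by polynomials of total degree at most $n$ at the equally spaced nodes of a triangle. Then $$\Lambda_n\le \Big(7+\mu_n\Big)\,\frac{2^{n+1}}{e\,n(\ln n-\ln 2)}\Big(1+\frac{15}{n-3}\Big),\qquad\text{where}\qquad \mu_n\le \frac{3e\,n(\ln n)^3}{2^{n/3}}+\frac{e\,n^2\ln n}{2^n}.$$ In particular $\mu_n\to 0$ as $n\to\infty$.
   Context: Let $\Delta\subset\mathbb{R}^2$ be a non-degenerate triangle; points of $\Delta$ are identified with their barycentric coordinates $\lambda=(\lambda_1,\lambda_2,\lambda_3)$, $\lambda_r\ge 0$, $\lambda_1+\lambda_2+\lambda_3=1$. For an integer $n\ge1$ let $I=\{i=(i_1,i_2,i_3)\in\mathbb{Z}_+^3: i_1+i_2+i_3=n\}$ and let the nodes be $a_i=(i_1/n,i_2/n,i_3/n)$, $i\in I$. The Lagrange fundamental polynomials $l_i$, $i\in I$, are the polynomials of total degree $\le n$ with $l_i(a_j)=\delta_{ij}$; explicitly $l_i(\lambda)=\prod_{s=1}^{3}\frac{1}{i_s!}\prod_{t=0}^{i_s-1}(n\lambda_s-t)$. The Lebesgue function is $\mathcal{L}_n(\lambda)=\sum_{i\in I}|l_i(\lambda)|$ and the Lebesgue constant is $\Lambda_n=\max_{\lambda\in\Delta}\mathcal{L}_n(\lambda)$, which equals the operator norm on $C(\Delta)$ of the map $f\mapsto \sum_{i\in I}f(a_i)l_i$. *)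

theory Defs
  imports Complex_Main
begin

definition idx_set :: "nat \<Rightarrow> (nat \<times> nat \<times> nat) set" where
  "idx_set n = {(i1, i2, i3). i1 + i2 + i3 = n}"

definition bary_simplex :: "(real \<times> real \<times> real) set" where
  "bary_simplex = {(l1, l2, l3). l1 \<ge> 0 \<and> l2 \<ge> 0 \<and> l3 \<ge> 0 \<and> l1 + l2 + l3 = 1}"

definition lag_factor :: "nat \<Rightarrow> nat \<Rightarrow> real \<Rightarrow> real" where
  "lag_factor n k x = (\<Prod>t<k. (real n * x - real t)) / fact k"

definition lagrange_fund :: "nat \<Rightarrow> nat \<times> nat \<times> nat \<Rightarrow> real \<times> real \<times> real \<Rightarrow> real" where
  "lagrange_fund n i l = (case i of (i1, i2, i3) \<Rightarrow> case l of (l1, l2, l3) \<Rightarrow>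
      lag_factor n i1 l1 * lag_factor n i2 l2 * lag_factor n i3 l3)"

definition lebesgue_fun :: "nat \<Rightarrow> real \<times> real \<times> real \<Rightarrow> real" where
  "lebesgue_fun n l = (\<Sum>i\<in>idx_set n. \<bar>lagrange_fund n i l\<bar>)"

definition lebesgue_const :: "nat \<Rightarrow> real" where
  "lebesgue_const n = (SUP l\<in>bary_simplex. lebesgue_fun n l)"

end

theory Submission
  imports Defs "HOL-Computational_Algebra.Formal_Power_Series" "HOL-Analysis.Convex" "HOL-Real_Asymp.Real_Asymp"
begin
lemma gch_Suc: "(a::real) gchoose (Suc k) = (a gchoose k) * (a - of_nat k) / (of_nat k + 1)"
  by (simp add: gbinomial_prod_rev field_simps)

lemma p_nonpos:
  assumes "0 \<le> t" "t \<le> 1" "k \<ge> 1"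
  shows "(-1)^k * ((t::real) gchoose k) \<le> 0"
  using assms(3)
proof (induction k rule: dec_induct)
  case base
  then show ?case using assms by simp
next
  case (step k)
  have "(-1)^Suc k * (t gchoose Suc k) = ((-1)^k * (t gchoose k)) * ((of_nat k - t) / (of_nat k + 1))"
    by (simp add: gch_Suc field_simps)
  also have "\<dots> \<le> 0"
  proof (rule mult_nonpos_nonneg)
    show "(-1)^k * (t gchoose k) \<le> 0" using step by simp
    show "0 \<le> (of_nat k - t) / (of_nat k + 1)" using step assms by simp
  qed
  finally show ?case .
qed

lemma gch_abs_bound:
  assumes "0 \<le> t" "t \<le> 1" "k \<ge> 1"
  shows "\<bar>(t::real) gchoose k\<bar> \<le> t / real k * exp (- t * (\<Sum>r=1..<k. 1 / real r))"
  using assms(3)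
proof (induction k rule: dec_induct)
  case base
  then show ?case using assms by simp
next
  case (step k)
  have "\<bar>t gchoose Suc k\<bar> = \<bar>t gchoose k\<bar> * ((real k - t) / (real k + 1))"
    using step assms by (simp add: gch_Suc abs_mult abs_divide)
  also have "\<dots> \<le> t / real k * exp (- t * (\<Sum>r=1..<k. 1 / real r)) * ((real k - t) / (real k + 1))"
    using step assms by (intro mult_right_mono) auto
  also have "(real k - t) / real k \<le> exp (- (t / real k))"
  proof -
    have "(real k - t) / real k = 1 + (- (t / real k))" using step by (simp add: field_simps)
    also have "\<dots> \<le> exp (- (t / real k))" by (rule exp_ge_add_one_self)
    finally show ?thesis .
  qed
  hence "t / real k * exp (- t * (\<Sum>r=1..<k. 1 / real r)) * ((real k - t) / (real k + 1))
      \<le> t / (real k + 1) * exp (- t * (\<Sum>r=1..<k. 1 / real r)) * exp (- (t / real k))"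
  proof -
    assume h: "(real k - t) / real k \<le> exp (- (t / real k))"
    have "t / real k * exp (- t * (\<Sum>r=1..<k. 1 / real r)) * ((real k - t) / (real k + 1))
       = t / (real k + 1) * exp (- t * (\<Sum>r=1..<k. 1 / real r)) * ((real k - t) / real k)"
      using step by (simp add: field_simps)
    also have "\<dots> \<le> t / (real k + 1) * exp (- t * (\<Sum>r=1..<k. 1 / real r)) * exp (- (t / real k))"
      using h assms by (intro mult_left_mono) auto
    finally show ?thesis .
  qed
  also have "\<dots> = t / real (Suc k) * exp (- t * (\<Sum>r=1..<Suc k. 1 / real r))"
    using step by (simp add: exp_add[symmetric] algebra_simps)
  finally show ?case .
qed

lemma ln_le_harmsum: "k \<ge> 1 \<Longrightarrow> ln (real k) \<le> (\<Sum>r=1..<k. 1 / real r)"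
proof (induction k rule: dec_induct)
  case base then show ?case by simp
next
  case (step k)
  have "real (Suc k) = real k * (1 + 1 / real k)" using step by (simp add: field_simps)
  moreover have "0 < 1 + 1 / real k" using step by (simp add: add_pos_nonneg)
  ultimately have "ln (real (Suc k)) = ln (real k) + ln (1 + 1 / real k)"
    using step by (simp add: ln_mult)
  also have "ln (1 + 1 / real k) \<le> 1 / real k"
    using step by (intro ln_add_one_self_le_self) auto
  finally show ?case using step by simp
qed

lemma gch_abs_bound2:
  assumes "0 \<le> t" "t \<le> 1" "k \<ge> 1"
  shows "\<bar>(t::real) gchoose k\<bar> \<le> t / real k * exp (- t * ln (real k))"
proof -
  have "exp (- t * (\<Sum>r=1..<k. 1 / real r)) \<le> exp (- t * ln (real k))"
    using ln_le_harmsum[OF assms(3)] assms by (simp add: mult_left_mono)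
  hence "t / real k * exp (- t * (\<Sum>r=1..<k. 1 / real r)) \<le> t / real k * exp (- t * ln (real k))"
    using assms by (intro mult_left_mono) auto
  thus ?thesis using gch_abs_bound[OF assms] by linarith
qed

lemma gch_abs_bound_big:
  assumes "1 \<le> u" "u \<le> 2" "k \<ge> 2"
  shows "\<bar>(u::real) gchoose k\<bar> \<le> 2 / (real k * (real k - 1))"
  using assms(3)
proof (induction k rule: dec_induct)
  case base
  have e: "u gchoose 2 = u * (u - 1) / 2" by (simp add: gch_Suc[of _ 1, simplified] numeral_2_eq_2)
  have "u * (u - 1) \<le> 2 * 1" using assms by (intro mult_mono) auto
  moreover have "0 \<le> u * (u - 1)" using assms by simp
  ultimately have "0 \<le> u gchoose 2 \<and> u gchoose 2 \<le> 1" unfolding e by linarith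
  thus ?case by simp
next
  case (step k)
  have "\<bar>u gchoose Suc k\<bar> = \<bar>u gchoose k\<bar> * ((real k - u) / (real k + 1))"
    using step assms by (simp add: gch_Suc abs_mult abs_divide)
  also have "\<dots> \<le> 2 / (real k * (real k - 1)) * ((real k - 1) / (real k + 1))"
    using step assms by (intro mult_mono divide_right_mono) auto
  also have "\<dots> = 2 / (real (Suc k) * (real (Suc k) - 1))"
  proof -
    have h: "real k - 1 > 0" "real k > 0" using step by auto
    have "2 / (real k * (real k - 1)) * ((real k - 1) / (real k + 1)) = 2 / (real k * (real k + 1))"
      using h by (simp add: divide_simps)
    thus ?thesis by (simp add: algebra_simps)
  qed
  finally show ?case .
qed

definition absf :: "real fps \<Rightarrow> real fps" where "absf f = Abs_fps (\<lambda>k. \<bar>fps_nth f k \<bar>)"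
definition Dfps :: "real \<Rightarrow> real fps" where "Dfps u = Abs_fps (\<lambda>k. (-1)^k * (u gchoose k))"
definition cle :: "real fps \<Rightarrow> real fps \<Rightarrow> bool" where "cle f g \<longleftrightarrow> (\<forall>k. fps_nth f k \<le> fps_nth g k)"
definition nnf :: "real fps \<Rightarrow> bool" where "nnf f \<longleftrightarrow> (\<forall>k. 0 \<le> fps_nth f k)"

lemma absf_nth[simp]: "fps_nth (absf f) k = \<bar>fps_nth f k \<bar>" by (simp add: absf_def)
lemma Dfps_nth[simp]: "fps_nth (Dfps u) k = (-1)^k * (u gchoose k)" by (simp add: Dfps_def)

lemma nnf_absf: "nnf (absf f)" by (simp add: nnf_def)

lemma nnf_mult: "nnf a \<Longrightarrow> nnf b \<Longrightarrow> nnf (a * b)"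
  unfolding nnf_def fps_mult_nth by (auto intro!: sum_nonneg)

lemma cle_trans: "cle a b \<Longrightarrow> cle b c \<Longrightarrow> cle a c"
  unfolding cle_def by (meson order_trans)

lemma absf_mult_le: "cle (absf (f * g)) (absf f * absf g)"
  unfolding cle_def fps_mult_nth absf_nth
  by (auto intro: order_trans[OF sum_abs] simp: abs_mult)

lemma cle_mult:
  assumes "nnf a" "nnf c" "cle a b" "cle c d"
  shows "cle (a * c) (b * d)"
  unfolding cle_def fps_mult_nth
proof (intro allI sum_mono)
  fix n i
  show "fps_nth a i * fps_nth c (n - i) \<le> fps_nth b i * fps_nth d (n - i)"
    using assms unfolding nnf_def cle_def
    by (intro mult_mono) (auto intro: order_trans)
qed

lemma Dfps_mult: "Dfps a * Dfps b = Dfps (a + b)"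
proof (rule fps_ext)
  fix n
  have "fps_nth (Dfps a * Dfps b) n = (\<Sum>i=0..n. (-1)^n * ((a gchoose i) * (b gchoose (n - i))))"
    unfolding fps_mult_nth Dfps_nth
  proof (intro sum.cong refl)
    fix i assume "i \<in> {0..n}"
    hence "(-1::real)^i * (-1)^(n-i) = (-1)^n" by (simp add: power_add[symmetric])
    thus "(-1) ^ i * (a gchoose i) * ((-1) ^ (n - i) * (b gchoose (n - i))) =
         (-1) ^ n * ((a gchoose i) * (b gchoose (n - i)))"
      by (metis (no_types, lifting) mult.assoc mult.left_commute)
  qed
  also have "\<dots> = (-1)^n * ((a + b) gchoose n)"
    by (simp add: sum_distrib_left[symmetric] gbinomial_Vandermonde)
  finally show "fps_nth (Dfps a * Dfps b) n = fps_nth (Dfps (a + b)) n" by simp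
qed

lemma absf_binom_nat: "absf (fps_binomial (of_nat m)) = fps_binomial (of_nat m)"
  by (rule fps_ext) (simp add: binomial_gbinomial[symmetric])

lemma absf_binom_t:
  assumes "0 \<le> t" "t \<le> 1"
  shows "absf (fps_binomial t) = 2 - Dfps t"
proof (rule fps_ext)
  fix k
  show "fps_nth (absf (fps_binomial t)) k = fps_nth (2 - Dfps t) k"
  proof (cases "k = 0")
    case True then show ?thesis by simp
  next
    case False
    hence "(-1)^k * (t gchoose k) \<le> 0" using p_nonpos assms by simp
    moreover have "\<bar>(-1)^k * (t gchoose k)\<bar> = \<bar>t gchoose k\<bar>" by (simp add: abs_mult)
    ultimately show ?thesis using False by (simp add: fps_numeral_nth)
  qed
qed

lemma prod3_expand:
  "(2 - Dfps a) * (2 - Dfps b) * (2 - Dfps c) =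
    8 - 4 * (Dfps a + Dfps b + Dfps c) + 2 * (Dfps (a+b) + Dfps (a+c) + Dfps (b+c)) - Dfps (a+b+c)"
proof -
  have "(2 - Dfps a) * (2 - Dfps b) * (2 - Dfps c) =
    8 - 4 * (Dfps a + Dfps b + Dfps c) + 2 * (Dfps a * Dfps b + Dfps a * Dfps c + Dfps b * Dfps c)
      - Dfps a * Dfps b * Dfps c"
    by (simp add: algebra_simps)
  thus ?thesis by (simp add: Dfps_mult)
qed

lemma main_cle:
  fixes t1 t2 t3 :: real and m1 m2 m3 :: nat
  assumes "0 \<le> t1" "t1 \<le> 1" "0 \<le> t2" "t2 \<le> 1" "0 \<le> t3" "t3 \<le> 1"
  shows "cle (absf (fps_binomial (of_nat m1 + t1)) * absf (fps_binomial (of_nat m2 + t2))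
               * absf (fps_binomial (of_nat m3 + t3)))
             (((2 - Dfps t1) * (2 - Dfps t2) * (2 - Dfps t3)) * fps_binomial (of_nat (m1 + m2 + m3)))"
proof -
  have one: "cle (absf (fps_binomial (of_nat m + t))) (fps_binomial (of_nat m) * (2 - Dfps t))"
    if "0 \<le> t" "t \<le> 1" for m t
    using absf_mult_le[of "fps_binomial (of_nat m)" "fps_binomial t"]
    by (simp add: fps_binomial_add_mult absf_binom_nat absf_binom_t that)
  have nn: "nnf (fps_binomial (of_nat m) * (2 - Dfps t))" if "0 \<le> t" "t \<le> 1" for m t
    using nnf_mult[OF nnf_absf nnf_absf, of "fps_binomial (of_nat m)" "fps_binomial t"]
    by (simp add: absf_binom_nat absf_binom_t that)
  have "cle (absf (fps_binomial (of_nat m1 + t1)) * absf (fps_binomial (of_nat m2 + t2))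
               * absf (fps_binomial (of_nat m3 + t3)))
         ((fps_binomial (of_nat m1) * (2 - Dfps t1)) * (fps_binomial (of_nat m2) * (2 - Dfps t2))
          * (fps_binomial (of_nat m3) * (2 - Dfps t3)))"
    by (intro cle_mult nnf_mult nnf_absf one assms)
  also have "((fps_binomial (of_nat m1) * (2 - Dfps t1)) * (fps_binomial (of_nat m2) * (2 - Dfps t2))
          * (fps_binomial (of_nat m3) * (2 - Dfps t3))) =
     ((2 - Dfps t1) * (2 - Dfps t2) * (2 - Dfps t3)) * fps_binomial (of_nat (m1 + m2 + m3))"
    by (simp add: fps_binomial_add_mult mult_ac)
  finally show ?thesis .
qed

lemma neg_p_le: "- ((-1::real)^Q * g) \<le> \<bar>g\<bar>"
proof -
  have "- ((-1::real)^Q * g) \<le> \<bar>(-1)^Q * g\<bar>" by (rule abs_ge_minus_self)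
  also have "\<dots> = \<bar>g\<bar>" by (simp add: abs_mult)
  finally show ?thesis .
qed

lemma p_le: "(-1::real)^Q * g \<le> \<bar>g\<bar>"
proof -
  have "(-1::real)^Q * g \<le> \<bar>(-1)^Q * g\<bar>" by (rule abs_ge_self)
  also have "\<dots> = \<bar>g\<bar>" by (simp add: abs_mult)
  finally show ?thesis .
qed

lemma piece_b:
  fixes t :: real and M n :: nat
  assumes "0 \<le> t" "t \<le> 1" "M \<le> n" "t = 0 \<or> M < n"
  shows "(\<Sum>Q=1..n. real (M choose (n - Q)) * (- ((-1)^Q * (t gchoose Q))))
          \<le> (\<Sum>Q=1..n. real ((n - 1) choose (Q - 1)) * \<bar>t gchoose Q\<bar>)"
proof (rule sum_mono)
  fix Q assume Q: "Q \<in> {1..n}"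
  show "real (M choose (n - Q)) * (- ((-1)^Q * (t gchoose Q))) \<le> real ((n - 1) choose (Q - 1)) * \<bar>t gchoose Q\<bar>"
  proof (cases "t = 0")
    case True
    from Q obtain q where "Q = Suc q" by (cases Q) auto
    then show ?thesis using True by simp
  next
    case False
    hence "M \<le> n - 1" using assms by auto
    hence "M choose (n - Q) \<le> (n - 1) choose (n - Q)" by (rule binomial_right_mono)
    also have "(n - 1) choose (n - Q) = (n - 1) choose (Q - 1)"
      using Q binomial_symmetric[of "Q - 1" "n - 1"] by auto
    finally have c: "real (M choose (n - Q)) \<le> real ((n - 1) choose (Q - 1))" by simp
    have "- ((-1)^Q * (t gchoose Q)) \<le> \<bar>t gchoose Q\<bar>" by (rule neg_p_le)
    hence "real (M choose (n - Q)) * (- ((-1)^Q * (t gchoose Q))) \<le> real (M choose (n - Q)) * \<bar>t gchoose Q\<bar>"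
      by (rule mult_left_mono) simp
    also have "\<dots> \<le> real ((n - 1) choose (Q - 1)) * \<bar>t gchoose Q\<bar>"
      using c by (rule mult_right_mono) simp
    finally show ?thesis .
  qed
qed

lemma binom_shift2:
  assumes "2 \<le> Q" "Q \<le> n"
  shows "real ((n - 2) choose (Q - 2)) * (real n * (real n - 1)) = real (n choose Q) * (real Q * (real Q - 1))"
proof -
  define N where "N = n - 2"
  define J where "J = Q - 2"
  have NJ: "n = Suc (Suc N)" "Q = Suc (Suc J)" using assms unfolding N_def J_def by auto
  have e1: "Suc N * (N choose J) = (Suc N choose Suc J) * Suc J" by (rule Suc_times_binomial_eq)
  have e2: "Suc (Suc N) * (Suc N choose Suc J) = (Suc (Suc N) choose Suc (Suc J)) * Suc (Suc J)"
    by (rule Suc_times_binomial_eq)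
  have r1: "real (Suc N) * real (N choose J) = real (Suc N choose Suc J) * real (Suc J)"
    by (simp only: of_nat_mult[symmetric] e1)
  have r2: "real (Suc (Suc N)) * real (Suc N choose Suc J) = real (Suc (Suc N) choose Suc (Suc J)) * real (Suc (Suc J))"
    by (simp only: of_nat_mult[symmetric] e2)
  have "real (N choose J) * (real (Suc (Suc N)) * real (Suc N))
      = real (Suc (Suc N)) * (real (Suc N) * real (N choose J))" by (simp only: mult_ac)
  also have "\<dots> = real (Suc (Suc N)) * real (Suc N choose Suc J) * real (Suc J)" by (simp only: r1 mult_ac)
  also have "\<dots> = real (Suc (Suc N) choose Suc (Suc J)) * (real (Suc (Suc J)) * real (Suc J))" by (simp only: r2 mult_ac)
  finally have "real (N choose J) * (real (Suc (Suc N)) * real (Suc N))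
      = real (Suc (Suc N) choose Suc (Suc J)) * (real (Suc (Suc J)) * real (Suc J))" .
  moreover have "n - 2 = N" "Q - 2 = J" using NJ by auto
  ultimately show ?thesis unfolding NJ by simp
qed

lemma sum_choose_le: "(\<Sum>Q=1..n. real (n choose Q)) \<le> 2 ^ n"
proof -
  have "(\<Sum>Q=1..n. real (n choose Q)) \<le> (\<Sum>Q\<le>n. real (n choose Q))"
    by (intro sum_mono2) auto
  also have "\<dots> = real (\<Sum>Q\<le>n. n choose Q)" by simp
  also have "\<dots> = 2 ^ n" by (simp only: choose_row_sum) simp
  finally show ?thesis .
qed

lemma piece_c:
  fixes u :: real and M K n :: nat
  assumes "0 \<le> u" "u \<le> real K" "K \<le> 2" "M + K = n" "n \<ge> 2"
  shows "(\<Sum>Q=1..n. real (M choose (n - Q)) * ((-1)^Q * (u gchoose Q)))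
          \<le> 2 ^ (n + 1) / (real n * (real n - 1))"
proof (cases "u \<le> 1")
  case True
  have "(\<Sum>Q=1..n. real (M choose (n - Q)) * ((-1)^Q * (u gchoose Q))) \<le> (\<Sum>Q=1..n. 0)"
    using True assms by (intro sum_mono mult_nonneg_nonpos p_nonpos) auto
  also have "\<dots> \<le> 2 ^ (n + 1) / (real n * (real n - 1))" using assms by simp
  finally show ?thesis .
next
  case False
  hence K: "K = 2" using assms by linarith
  hence M: "M = n - 2" using assms by simp
  have nn: "real n * (real n - 1) > 0" using assms by simp
  have "(\<Sum>Q=1..n. real (M choose (n - Q)) * ((-1)^Q * (u gchoose Q)))
        \<le> (\<Sum>Q=1..n. 2 / (real n * (real n - 1)) * real (n choose Q))"
  proof (rule sum_mono)
    fix Q assume Q: "Q \<in> {1..n}"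
    show "real (M choose (n - Q)) * ((-1)^Q * (u gchoose Q)) \<le> 2 / (real n * (real n - 1)) * real (n choose Q)"
    proof (cases "Q = 1")
      case True
      have z: "real (M choose (n - Q)) = 0" using True M assms by simp
      show ?thesis using nn by (simp add: z)
    next
      case False
      hence Q2: "2 \<le> Q" "Q \<le> n" using Q by auto
      have nq: "n - Q = (n - 2) - (Q - 2)" using Q2 by simp
      have cM: "M choose (n - Q) = (n - 2) choose (Q - 2)"
        unfolding M nq by (rule binomial_symmetric[symmetric]) (use Q2 in simp)
      have "\<bar>u gchoose Q\<bar> \<le> 2 / (real Q * (real Q - 1))"
        using gch_abs_bound_big[of u Q] assms Q2 \<open>\<not> u \<le> 1\<close> by simp
      hence "(-1)^Q * (u gchoose Q) \<le> 2 / (real Q * (real Q - 1))"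
        using p_le[of Q "u gchoose Q"] by linarith
      hence "real (M choose (n - Q)) * ((-1)^Q * (u gchoose Q))
             \<le> real ((n - 2) choose (Q - 2)) * (2 / (real Q * (real Q - 1)))"
        unfolding cM by (intro mult_left_mono) auto
      also have "\<dots> = 2 / (real n * (real n - 1)) * real (n choose Q)"
        using binom_shift2[OF Q2] Q2 nn by (simp add: field_simps)
      finally show ?thesis .
    qed
  qed
  also have "\<dots> = 2 / (real n * (real n - 1)) * (\<Sum>Q=1..n. real (n choose Q))"
    by (simp add: sum_distrib_left)
  also have "\<dots> \<le> 2 / (real n * (real n - 1)) * 2 ^ n"
    using nn by (intro mult_left_mono sum_choose_le) auto
  also have "\<dots> = 2 ^ (n + 1) / (real n * (real n - 1))" by simp
  finally show ?thesis .
qed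

lemma piece_d:
  fixes M K n :: nat
  assumes "M + K = n"
  shows "(\<Sum>Q=1..n. real (M choose (n - Q)) * (- ((-1)^Q * (real K gchoose Q)))) \<le> 1"
proof -
  have "(\<Sum>Q=1..n. real (M choose (n - Q)) * (- ((-1)^Q * (real K gchoose Q))))
        \<le> (\<Sum>Q=1..n. real ((K choose Q) * (M choose (n - Q))))"
  proof (intro sum_mono)
    fix Q
    have "- ((-1)^Q * (real K gchoose Q)) \<le> real (K choose Q)"
      using neg_p_le[of Q "real K gchoose Q"] by (simp add: binomial_gbinomial[symmetric])
    hence "real (M choose (n - Q)) * (- ((-1)^Q * (real K gchoose Q))) \<le> real (M choose (n - Q)) * real (K choose Q)"
      by (rule mult_left_mono) simp
    thus "real (M choose (n - Q)) * (- ((-1)^Q * (real K gchoose Q))) \<le> real ((K choose Q) * (M choose (n - Q)))"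
      by (simp add: mult.commute)
  qed
  also have "\<dots> \<le> (\<Sum>Q=0..n. real ((K choose Q) * (M choose (n - Q))))"
    by (intro sum_mono2) auto
  also have "\<dots> = real (\<Sum>Q=0..n. (K choose Q) * (M choose (n - Q)))"
    by simp
  also have "\<dots> = real ((K + M) choose n)"
    by (simp only: binomial_Vandermonde)
  also have "\<dots> = 1" using assms by (simp add: add.commute)
  finally show ?thesis .
qed

lemma exp_tangent:
  assumes "0 \<le> t" "t \<le> 1"
  shows "exp (t * z) \<le> 1 - t + t * exp (z::real)"
  using convex_onD[OF exp_convex assms, of 0 z] by simp

lemma t_exp_bound:
  fixes t L :: real
  assumes "0 \<le> t" "L > 0"
  shows "t * exp (- t * L) \<le> 1 / (exp 1 * L)"
proof -
  have "t * L \<le> exp (t * L - 1)"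
    using exp_ge_add_one_self[of "t * L - 1"] by simp
  also have "\<dots> = exp (t * L) / exp 1" by (simp add: exp_diff)
  finally have "t * L * exp 1 \<le> exp (t * L)" by (simp add: field_simps)
  hence "t * L * exp 1 * exp (- t * L) \<le> exp (t * L) * exp (- t * L)"
    by (rule mult_right_mono) simp
  also have "\<dots> = 1" by (simp add: exp_add[symmetric])
  finally have "t * exp (- t * L) * (exp 1 * L) \<le> 1" by (simp add: algebra_simps)
  thus ?thesis using assms by (simp add: field_simps)
qed

lemma sum_shift_choose:
  "(\<Sum>Q=1..n. real (Suc n choose Suc Q)) \<le> 2 ^ Suc n"
proof -
  have "(\<Sum>Q=1..n. real (Suc n choose Suc Q)) = (\<Sum>j\<in>Suc ` {1..n}. real (Suc n choose j))"
    by (subst sum.reindex) (auto simp del: binomial_Suc_Suc)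
  also have "\<dots> \<le> (\<Sum>j\<le>Suc n. real (Suc n choose j))"
    by (intro sum_mono2) auto
  also have "\<dots> = real (\<Sum>j\<le>Suc n. Suc n choose j)" by simp
  also have "\<dots> = 2 ^ Suc n" by (simp only: choose_row_sum) simp
  finally show ?thesis .
qed

lemma R_bound:
  assumes "n \<ge> 1"
  shows "(\<Sum>Q=1..n. real (n choose Q) / real Q) \<le> 2 ^ (n + 1) / real n * (1 + 6 / real n)"
proof -
  have R1: "real (Suc m) * real (m choose k) = real (Suc m choose Suc k) * real (Suc k)" for m k
    by (simp only: of_nat_mult[symmetric] Suc_times_binomial_eq)
  have e1: "real (n choose Q) / (real Q + 1) = real (Suc n choose Suc Q) / (real n + 1)" for Q
  proof -
    obtain a b where ab: "a = real (n choose Q)" "b = real (Suc n choose Suc Q)" by blast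
    have h: "real (Suc n) * a = b * real (Suc Q)" using R1[of n Q] unfolding ab .
    have "a / (real Q + 1) = b / (real n + 1)"
    proof -
      have h': "(real n + 1) * a = b * (real Q + 1)" using h by (simp add: algebra_simps)
      have p: "real n + 1 \<noteq> 0" "real Q + 1 \<noteq> 0" by auto
      show ?thesis using h' p by (simp add: frac_eq_eq mult.commute)
    qed
    thus ?thesis unfolding ab .
  qed
  have e2: "real (n choose Q) / ((real Q + 1) * (real Q + 2))
      = real (Suc (Suc n) choose Suc (Suc Q)) / ((real n + 1) * (real n + 2))" for Q
  proof -
    obtain a b c where abc: "a = real (n choose Q)" "b = real (Suc n choose Suc Q)"
       "c = real (Suc (Suc n) choose Suc (Suc Q))" by blast
    have h1: "a / (real Q + 1) = b / (real n + 1)" using e1[of Q] unfolding abc .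
    have h2: "real (Suc (Suc n)) * b = c * real (Suc (Suc Q))" using R1[of "Suc n" "Suc Q"] unfolding abc .
    have "a / ((real Q + 1) * (real Q + 2)) = c / ((real n + 1) * (real n + 2))"
    proof -
      have h2': "(real n + 2) * b = c * (real Q + 2)" using h2 by (simp add: algebra_simps)
      have p: "real n + 1 > 0" "real Q + 1 > 0" "real n + 2 > 0" "real Q + 2 > 0" by auto
      have "a / ((real Q + 1) * (real Q + 2)) = (a / (real Q + 1)) / (real Q + 2)" by simp
      also have "\<dots> = b / ((real n + 1) * (real Q + 2))" unfolding h1 by simp
      also have "b = c * (real Q + 2) / (real n + 2)" using h2' p by (simp add: field_simps)
      also have "c * (real Q + 2) / (real n + 2) / ((real n + 1) * (real Q + 2)) = c / ((real n + 1) * (real n + 2))"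
      proof -
        have g: "c * q / m / (pp * q) = c / (pp * m)" if "q \<noteq> 0" "m \<noteq> 0" "pp \<noteq> 0" for q m pp :: real
          using that by (simp add: divide_simps)
        show ?thesis using p by (intro g) auto
      qed
      finally show ?thesis .
    qed
    thus ?thesis unfolding abc .
  qed
  have "(\<Sum>Q=1..n. real (n choose Q) / real Q)
      \<le> (\<Sum>Q=1..n. real (Suc n choose Suc Q) / (real n + 1)
            + 3 * (real (Suc (Suc n) choose Suc (Suc Q)) / ((real n + 1) * (real n + 2))))"
  proof (rule sum_mono)
    fix Q assume Q: "Q \<in> {1..n}"
    have gen: "\<And>c x y::real. c * (1/x + 3/y) = c/x + 3*(c/y)" by (simp add: algebra_simps)
    have "1 / real Q \<le> 1 / (real Q + 1) + 3 / ((real Q + 1) * (real Q + 2))"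
      using Q by (simp add: divide_simps) (simp add: algebra_simps)
    hence "real (n choose Q) * (1 / real Q) \<le> real (n choose Q) * (1 / (real Q + 1) + 3 / ((real Q + 1) * (real Q + 2)))"
      by (rule mult_left_mono) simp
    also have "\<dots> = real (n choose Q) / (real Q + 1) + 3 * (real (n choose Q) / ((real Q + 1) * (real Q + 2)))"
      by (simp only: gen)
    also have "\<dots> = real (Suc n choose Suc Q) / (real n + 1)
            + 3 * (real (Suc (Suc n) choose Suc (Suc Q)) / ((real n + 1) * (real n + 2)))"
      by (simp only: e1 e2)
    finally show "real (n choose Q) / real Q \<le> real (Suc n choose Suc Q) / (real n + 1)
            + 3 * (real (Suc (Suc n) choose Suc (Suc Q)) / ((real n + 1) * (real n + 2)))"
      by simp
  qed
  also have "\<dots> = (\<Sum>Q=1..n. real (Suc n choose Suc Q)) / (real n + 1)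
       + 3 * (\<Sum>Q=1..n. real (Suc (Suc n) choose Suc (Suc Q))) / ((real n + 1) * (real n + 2))"
    by (simp only: sum.distrib sum_divide_distrib sum_distrib_left times_divide_eq_right)
  also have "\<dots> \<le> 2 ^ Suc n / (real n + 1) + 3 * 2 ^ Suc (Suc n) / ((real n + 1) * (real n + 2))"
  proof -
    have a: "(\<Sum>Q=1..n. real (Suc n choose Suc Q)) \<le> 2 ^ Suc n" by (rule sum_shift_choose)
    have "(\<Sum>Q=1..n. real (Suc (Suc n) choose Suc (Suc Q))) \<le> (\<Sum>Q=1..Suc n. real (Suc (Suc n) choose Suc Q))"
    proof -
      have "(\<Sum>Q=1..n. real (Suc (Suc n) choose Suc (Suc Q))) = (\<Sum>Q\<in>Suc ` {1..n}. real (Suc (Suc n) choose Suc Q))"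
        by (subst sum.reindex) (auto simp del: binomial_Suc_Suc)
      also have "\<dots> \<le> (\<Sum>Q=1..Suc n. real (Suc (Suc n) choose Suc Q))"
        by (intro sum_mono2) auto
      finally show ?thesis .
    qed
    also have "\<dots> \<le> 2 ^ Suc (Suc n)" by (rule sum_shift_choose)
    finally have b: "(\<Sum>Q=1..n. real (Suc (Suc n) choose Suc (Suc Q))) \<le> 2 ^ Suc (Suc n)" .
    have "(\<Sum>Q=1..n. real (Suc n choose Suc Q)) / (real n + 1) \<le> 2 ^ Suc n / (real n + 1)"
      using a by (rule divide_right_mono) simp
    moreover have "3 * (\<Sum>Q=1..n. real (Suc (Suc n) choose Suc (Suc Q))) / ((real n + 1) * (real n + 2))
         \<le> 3 * 2 ^ Suc (Suc n) / ((real n + 1) * (real n + 2))"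
      using b by (intro divide_right_mono mult_left_mono) auto
    ultimately show ?thesis by (rule add_mono)
  qed
  also have "\<dots> = 2 ^ Suc n * (1 / (real n + 1) + 6 / ((real n + 1) * (real n + 2)))"
    by (simp add: algebra_simps)
  also have "\<dots> \<le> 2 ^ Suc n * (1 / real n * (1 + 6 / real n))"
  proof (rule mult_left_mono)
    show "1 / (real n + 1) + 6 / ((real n + 1) * (real n + 2)) \<le> 1 / real n * (1 + 6 / real n)"
      using assms by (simp add: divide_simps) (simp add: algebra_simps)
  qed simp
  also have "\<dots> = 2 ^ (n + 1) / real n * (1 + 6 / real n)" by simp
  finally show ?thesis .
qed

lemma A_bound:
  assumes "n \<ge> 3" "0 \<le> t" "t \<le> 1"
  shows "(\<Sum>Q=1..n. real ((n - 1) choose (Q - 1)) * \<bar>t gchoose Q\<bar>)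
          \<le> 2 ^ n * (1 + 6 / real n) / (real n * exp 1 * (ln (real n) - ln 2))"
proof -
  define L where "L = ln (real n) - ln 2"
  have L0: "L > 0" using assms unfolding L_def by (simp add: ln_less_cancel_iff)
  have n0: "real n > 0" using assms by simp
  have step: "real ((n - 1) choose (Q - 1)) * \<bar>t gchoose Q\<bar>
       \<le> t / real n * exp (- t * L) * (real (n choose Q) * (1 - t) + t * (real n / 2) * (real (n choose Q) / real Q))"
    if Q: "Q \<in> {1..n}" for Q
  proof -
    have eq: "real ((n - 1) choose (Q - 1)) / real Q = real (n choose Q) / real n"
    proof -
      have "Suc (n - 1) * ((n - 1) choose (Q - 1)) = (Suc (n - 1) choose Suc (Q - 1)) * Suc (Q - 1)"
        by (rule Suc_times_binomial_eq)
      hence "real n * real ((n - 1) choose (Q - 1)) = real (n choose Q) * real Q"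
        using Q by (metis Suc_pred' atLeastAtMost_iff less_le_trans of_nat_mult zero_less_one)
      thus ?thesis using Q n0 by (simp add: field_simps)
    qed
    have "exp (- t * ln (real Q)) = exp (- t * L) * exp (t * (L - ln (real Q)))"
      by (simp add: exp_add[symmetric] algebra_simps)
    also have "\<dots> \<le> exp (- t * L) * (1 - t + t * exp (L - ln (real Q)))"
      using exp_tangent[OF assms(2,3)] by (intro mult_left_mono) auto
    also have "exp (L - ln (real Q)) = real n / (2 * real Q)"
      using Q n0 unfolding L_def by (simp add: exp_diff)
    finally have ex: "exp (- t * ln (real Q)) \<le> exp (- t * L) * (1 - t + t * (real n / (2 * real Q)))" .
    have "real ((n - 1) choose (Q - 1)) * \<bar>t gchoose Q\<bar>
        \<le> real ((n - 1) choose (Q - 1)) * (t / real Q * exp (- t * ln (real Q)))"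
      using gch_abs_bound2[OF assms(2,3), of Q] Q by (intro mult_left_mono) auto
    also have "\<dots> = t * (real ((n - 1) choose (Q - 1)) / real Q) * exp (- t * ln (real Q))"
      by simp
    also have "\<dots> = t * (real (n choose Q) / real n) * exp (- t * ln (real Q))"
      by (simp only: eq)
    also have "\<dots> \<le> t * (real (n choose Q) / real n) * (exp (- t * L) * (1 - t + t * (real n / (2 * real Q))))"
      using ex assms by (intro mult_left_mono) auto
    also have "\<dots> = t / real n * exp (- t * L) * (real (n choose Q) * (1 - t) + t * (real n / 2) * (real (n choose Q) / real Q))"
      using Q n0 by (simp add: field_simps)
    finally show ?thesis .
  qed
  have "(\<Sum>Q=1..n. real ((n - 1) choose (Q - 1)) * \<bar>t gchoose Q\<bar>)
      \<le> (\<Sum>Q=1..n. t / real n * exp (- t * L) * (real (n choose Q) * (1 - t) + t * (real n / 2) * (real (n choose Q) / real Q)))"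
    by (rule sum_mono) (rule step)
  also have "\<dots> = t / real n * exp (- t * L) * ((1 - t) * (\<Sum>Q=1..n. real (n choose Q)) + t * (real n / 2) * (\<Sum>Q=1..n. real (n choose Q) / real Q))"
  proof -
    have g: "(\<Sum>Q\<in>A. kk * (f Q * a + b * g Q)) = kk * (a * sum f A + b * sum g A)" for kk a b :: real and f g A
      by (simp add: sum.distrib sum_distrib_left[symmetric] sum_distrib_right[symmetric] algebra_simps)
    show ?thesis by (rule g)
  qed
  also have "\<dots> \<le> t / real n * exp (- t * L) * ((1 - t) * 2 ^ n + t * (real n / 2) * (2 ^ (n + 1) / real n * (1 + 6 / real n)))"
    using assms sum_choose_le[of n] R_bound[of n]
    by (intro mult_left_mono add_mono) auto
  also have "\<dots> = t / real n * exp (- t * L) * (2 ^ n * (1 + t * (6 / real n)))"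
    using n0 by (simp add: field_simps)
  also have "\<dots> \<le> t / real n * exp (- t * L) * (2 ^ n * (1 + 6 / real n))"
  proof -
    have "t * (6 / real n) \<le> 6 / real n" using assms n0 by (intro mult_left_le_one_le) auto
    thus ?thesis using assms n0 by (intro mult_left_mono) auto
  qed
  also have "\<dots> = (t * exp (- t * L)) * (2 ^ n * (1 + 6 / real n) / real n)"
    by simp
  also have "\<dots> \<le> 1 / (exp 1 * L) * (2 ^ n * (1 + 6 / real n) / real n)"
    using t_exp_bound[OF assms(2) L0] n0 by (intro mult_right_mono) auto
  also have "\<dots> = 2 ^ n * (1 + 6 / real n) / (real n * exp 1 * L)"
    by (simp add: field_simps)
  finally show ?thesis unfolding L_def .
qed

lemma fps_nth_num_mult: "fps_nth (numeral k * (f :: real fps)) i = numeral k * fps_nth f i"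
  by (simp add: numeral_fps_const)

lemma P_nth:
  "fps_nth (8 - 4 * (Dfps a + Dfps b + Dfps c) + 2 * (Dfps (a+b) + Dfps (a+c) + Dfps (b+c)) - Dfps (a+b+c)) i
   = (if i = 0 then 8 else 0) - 4 * (fps_nth (Dfps a) i + fps_nth (Dfps b) i + fps_nth (Dfps c) i)
     + 2 * (fps_nth (Dfps (a+b)) i + fps_nth (Dfps (a+c)) i + fps_nth (Dfps (b+c)) i) - fps_nth (Dfps (a+b+c)) i"
  by (simp only: fps_sub_nth fps_add_nth fps_nth_num_mult fps_numeral_nth)

lemma coef_bound:
  fixes t1 t2 t3 :: real and M K n :: nat
  assumes t: "0 \<le> t1" "t1 \<le> 1" "0 \<le> t2" "t2 \<le> 1" "0 \<le> t3" "t3 \<le> 1"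
    and T: "t1 + t2 + t3 = real K" and K2: "K \<le> 2" and MK: "M + K = n" and n4: "n \<ge> 4"
  shows "fps_nth (((2 - Dfps t1) * (2 - Dfps t2) * (2 - Dfps t3)) * fps_binomial (of_nat M)) n
     \<le> 2 + 12 * (2 ^ n * (1 + 6 / real n) / (real n * exp 1 * (ln (real n) - ln 2)))
           + 12 * 2 ^ n / (real n * (real n - 1))"
proof -
  define p where "p = (\<lambda>u::real. \<lambda>Q::nat. (-1)^Q * (u gchoose Q))"
  define c where "c = (\<lambda>Q. real (M choose (n - Q)))"
  define V where "V = 2 ^ n * (1 + 6 / real n) / (real n * exp 1 * (ln (real n) - ln 2))"
  define P where "P = (2 - Dfps t1) * (2 - Dfps t2) * (2 - Dfps t3)"
  have PQ: "fps_nth P Q = -4 * (p t1 Q + p t2 Q + p t3 Q) + 2 * (p (t1+t2) Q + p (t1+t3) Q + p (t2+t3) Q)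
            - p (real K) Q" if "Q \<ge> 1" for Q
    unfolding P_def prod3_expand P_nth p_def using that T by simp
  have P0: "fps_nth P 0 = 1" unfolding P_def prod3_expand P_nth by simp
  have "fps_nth (P * fps_binomial (of_nat M)) n = (\<Sum>Q=0..n. fps_nth P Q * c Q)"
    unfolding fps_mult_nth c_def by (simp add: binomial_gbinomial[symmetric])
  also have "\<dots> = fps_nth P 0 * c 0 + (\<Sum>Q=1..n. fps_nth P Q * c Q)"
    by (simp add: sum.atLeast_Suc_atMost)
  also have "(\<Sum>Q=1..n. fps_nth P Q * c Q)
     = 4 * (\<Sum>Q=1..n. c Q * (- p t1 Q)) + 4 * (\<Sum>Q=1..n. c Q * (- p t2 Q)) + 4 * (\<Sum>Q=1..n. c Q * (- p t3 Q))
       + 2 * (\<Sum>Q=1..n. c Q * p (t1+t2) Q) + 2 * (\<Sum>Q=1..n. c Q * p (t1+t3) Q) + 2 * (\<Sum>Q=1..n. c Q * p (t2+t3) Q)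
       + (\<Sum>Q=1..n. c Q * (- p (real K) Q))"
  proof -
    have "(\<Sum>Q=1..n. fps_nth P Q * c Q) = (\<Sum>Q=1..n.
        4 * (c Q * (- p t1 Q)) + 4 * (c Q * (- p t2 Q)) + 4 * (c Q * (- p t3 Q))
       + 2 * (c Q * p (t1+t2) Q) + 2 * (c Q * p (t1+t3) Q) + 2 * (c Q * p (t2+t3) Q)
       + (c Q * (- p (real K) Q)))"
      by (intro sum.cong refl) (simp add: PQ algebra_simps)
    thus ?thesis by (simp only: sum.distrib sum_distrib_left[symmetric])
  qed
  finally have eq: "fps_nth (P * fps_binomial (of_nat M)) n = fps_nth P 0 * c 0 +
       (4 * (\<Sum>Q=1..n. c Q * (- p t1 Q)) + 4 * (\<Sum>Q=1..n. c Q * (- p t2 Q)) + 4 * (\<Sum>Q=1..n. c Q * (- p t3 Q))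
       + 2 * (\<Sum>Q=1..n. c Q * p (t1+t2) Q) + 2 * (\<Sum>Q=1..n. c Q * p (t1+t3) Q) + 2 * (\<Sum>Q=1..n. c Q * p (t2+t3) Q)
       + (\<Sum>Q=1..n. c Q * (- p (real K) Q)))" .
  have c0: "c 0 \<le> 1" unfolding c_def
  proof -
    have "M \<le> n" using MK by simp
    show "real (M choose (n - 0)) \<le> 1"
      using \<open>M \<le> n\<close> by (cases "M = n") (auto simp: binomial_eq_0)
  qed
  have zeroK: "t = 0 \<or> M < n" if "t = t1 \<or> t = t2 \<or> t = t3" for t
  proof (cases "K = 0")
    case True
    hence "t1 = 0" "t2 = 0" "t3 = 0" using T t by auto
    then show ?thesis using that by auto
  next
    case False then show ?thesis using MK by simp
  qed
  have b: "(\<Sum>Q=1..n. c Q * (- p t Q)) \<le> V" if "t = t1 \<or> t = t2 \<or> t = t3" for t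
  proof -
    have tt: "0 \<le> t" "t \<le> 1" using that t by auto
    have "(\<Sum>Q=1..n. c Q * (- p t Q)) \<le> (\<Sum>Q=1..n. real ((n - 1) choose (Q - 1)) * \<bar>t gchoose Q\<bar>)"
      unfolding c_def p_def using piece_b[OF tt, of M n] zeroK[OF that] MK by simp
    also have "\<dots> \<le> V" unfolding V_def using A_bound[of n t] n4 tt by simp
    finally show ?thesis .
  qed
  have cc: "(\<Sum>Q=1..n. c Q * p u Q) \<le> 2 ^ (n + 1) / (real n * (real n - 1))"
    if "u = t1 + t2 \<or> u = t1 + t3 \<or> u = t2 + t3" for u
  proof -
    have "0 \<le> u" "u \<le> real K" using that t T by auto
    thus ?thesis unfolding c_def p_def using piece_c[of u K M n] K2 MK n4 by simp
  qed
  have d: "(\<Sum>Q=1..n. c Q * (- p (real K) Q)) \<le> 1"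
    unfolding c_def p_def using piece_d[OF MK] by simp
  have P0c: "fps_nth P 0 * c 0 \<le> 1" using P0 c0 by simp
  have "fps_nth (P * fps_binomial (of_nat M)) n \<le> 1 + (4 * V + 4 * V + 4 * V
      + 2 * (2 ^ (n + 1) / (real n * (real n - 1))) + 2 * (2 ^ (n + 1) / (real n * (real n - 1)))
      + 2 * (2 ^ (n + 1) / (real n * (real n - 1))) + 1)"
  proof -
    have b1: "(\<Sum>Q=1..n. c Q * (- p t1 Q)) \<le> V" by (rule b) simp
    have b2: "(\<Sum>Q=1..n. c Q * (- p t2 Q)) \<le> V" by (rule b) simp
    have b3: "(\<Sum>Q=1..n. c Q * (- p t3 Q)) \<le> V" by (rule b) simp
    have c1: "(\<Sum>Q=1..n. c Q * p (t1+t2) Q) \<le> 2 ^ (n + 1) / (real n * (real n - 1))" by (rule cc) simp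
    have c2: "(\<Sum>Q=1..n. c Q * p (t1+t3) Q) \<le> 2 ^ (n + 1) / (real n * (real n - 1))" by (rule cc) simp
    have c3: "(\<Sum>Q=1..n. c Q * p (t2+t3) Q) \<le> 2 ^ (n + 1) / (real n * (real n - 1))" by (rule cc) simp
    show ?thesis unfolding eq using P0c b1 b2 b3 c1 c2 c3 d by linarith
  qed
  also have "\<dots> = 2 + 12 * V + 12 * 2 ^ n / (real n * (real n - 1))"
    by (simp add: field_simps)
  finally show ?thesis unfolding P_def V_def .
qed

lemma lag_factor_gch: "lag_factor n k x = (real n * x) gchoose k"
  unfolding lag_factor_def gbinomial_prod_rev by (simp add: atLeast0LessThan)

lemma lebesgue_fun_fps:
  "lebesgue_fun n (l1, l2, l3) = fps_nth (absf (fps_binomial (real n * l1)) * absf (fps_binomial (real n * l2))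
       * absf (fps_binomial (real n * l3))) n"
proof -
  define a where "a = (\<lambda>i. \<bar>(real n * l1) gchoose i\<bar>)"
  define b where "b = (\<lambda>i. \<bar>(real n * l2) gchoose i\<bar>)"
  define c where "c = (\<lambda>i. \<bar>(real n * l3) gchoose i\<bar>)"
  have "fps_nth (absf (fps_binomial (real n * l1)) * absf (fps_binomial (real n * l2))
       * absf (fps_binomial (real n * l3))) n = (\<Sum>k=0..n. (\<Sum>i=0..k. a i * b (k - i)) * c (n - k))"
    unfolding fps_mult_nth a_def b_def c_def by simp
  also have "\<dots> = (\<Sum>k=0..n. \<Sum>i=0..k. a i * b (k - i) * c (n - k))"
    by (simp add: sum_distrib_right)
  also have "\<dots> = (\<Sum>(k, i)\<in>(SIGMA k:{0..n}. {0..k}). a i * b (k - i) * c (n - k))"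
    by (rule sum.Sigma) auto
  also have "\<dots> = (\<Sum>ii\<in>idx_set n. \<bar>lagrange_fund n ii (l1, l2, l3)\<bar>)"
  proof (rule sum.reindex_bij_witness[where j = "\<lambda>(k, i). (i, k - i, n - k)" and i = "\<lambda>(i1, i2, i3). (i1 + i2, i1)"])
    fix ii assume "ii \<in> idx_set n"
    then obtain i1 i2 i3 where ii: "ii = (i1, i2, i3)" "i1 + i2 + i3 = n" unfolding idx_set_def by auto
    show "(case (case ii of (i1, i2, i3) \<Rightarrow> (i1 + i2, i1)) of (k, i) \<Rightarrow> (i, k - i, n - k)) = ii"
      using ii by auto
    show "(case ii of (i1, i2, i3) \<Rightarrow> (i1 + i2, i1)) \<in> (SIGMA k:{0..n}. {0..k})"
      using ii by auto
  next
    fix kk assume "kk \<in> (SIGMA k:{0..n}. {0..k})"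
    then obtain k i where kk: "kk = (k, i)" "k \<le> n" "i \<le> k" by auto
    show "(case (case kk of (k, i) \<Rightarrow> (i, k - i, n - k)) of (i1, i2, i3) \<Rightarrow> (i1 + i2, i1)) = kk"
      using kk by auto
    show "(case kk of (k, i) \<Rightarrow> (i, k - i, n - k)) \<in> idx_set n"
      using kk unfolding idx_set_def by auto
    show "\<bar>lagrange_fund n (case kk of (k, i) \<Rightarrow> (i, k - i, n - k)) (l1, l2, l3)\<bar>
          = (case kk of (k, i) \<Rightarrow> a i * b (k - i) * c (n - k))"
      using kk unfolding lagrange_fund_def lag_factor_gch a_def b_def c_def by (simp add: abs_mult)
  qed
  finally show ?thesis unfolding lebesgue_fun_def by simp
qed

lemma pointwise_bound:
  assumes n4: "n \<ge> 4" and l: "l \<in> bary_simplex"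
  shows "lebesgue_fun n l \<le> 2 + 12 * (2 ^ n * (1 + 6 / real n) / (real n * exp 1 * (ln (real n) - ln 2)))
           + 12 * 2 ^ n / (real n * (real n - 1))"
proof -
  obtain l1 l2 l3 where ll: "l = (l1, l2, l3)" by (cases l) auto
  have nn: "l1 \<ge> 0" "l2 \<ge> 0" "l3 \<ge> 0" "l1 + l2 + l3 = 1" using l unfolding ll bary_simplex_def by auto
  define y1 where "y1 = real n * l1"
  define y2 where "y2 = real n * l2"
  define y3 where "y3 = real n * l3"
  have y0: "y1 \<ge> 0" "y2 \<ge> 0" "y3 \<ge> 0" unfolding y1_def y2_def y3_def using nn by auto
  have ysum: "y1 + y2 + y3 = real n" unfolding y1_def y2_def y3_def using nn(4)
    by (simp add: distrib_left[symmetric])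
  define m1 where "m1 = nat \<lfloor>y1\<rfloor>"
  define m2 where "m2 = nat \<lfloor>y2\<rfloor>"
  define m3 where "m3 = nat \<lfloor>y3\<rfloor>"
  define t1 where "t1 = y1 - real m1"
  define t2 where "t2 = y2 - real m2"
  define t3 where "t3 = y3 - real m3"
  have frac: "0 \<le> y - real (nat \<lfloor>y\<rfloor>) \<and> y - real (nat \<lfloor>y\<rfloor>) < 1" if "y \<ge> 0" for y :: real
  proof -
    have "real (nat \<lfloor>y\<rfloor>) = real_of_int \<lfloor>y\<rfloor>" using that by simp
    thus ?thesis by linarith
  qed
  have tt: "0 \<le> t1" "t1 < 1" "0 \<le> t2" "t2 < 1" "0 \<le> t3" "t3 < 1"
    unfolding t1_def t2_def t3_def m1_def m2_def m3_def using frac y0 by auto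
  define M where "M = m1 + m2 + m3"
  have Mle: "real M \<le> real n" unfolding M_def using tt ysum t1_def t2_def t3_def by simp
  hence "M \<le> n" by simp
  define K where "K = n - M"
  have MK: "M + K = n" unfolding K_def using \<open>M \<le> n\<close> by simp
  have TK: "t1 + t2 + t3 = real K"
  proof -
    have "real K = real n - real M" unfolding K_def using \<open>M \<le> n\<close> by simp
    thus ?thesis unfolding M_def t1_def t2_def t3_def using ysum by simp
  qed
  have K2: "K \<le> 2"
  proof -
    have "real K < 3" using TK tt by linarith
    thus ?thesis by simp
  qed
  have yeq: "y1 = real m1 + t1" "y2 = real m2 + t2" "y3 = real m3 + t3"
    unfolding t1_def t2_def t3_def by auto
  have "lebesgue_fun n l = fps_nth (absf (fps_binomial (of_nat m1 + t1)) * absf (fps_binomial (of_nat m2 + t2))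
       * absf (fps_binomial (of_nat m3 + t3))) n"
    unfolding ll lebesgue_fun_fps y1_def[symmetric] y2_def[symmetric] y3_def[symmetric] yeq by simp
  also have "\<dots> \<le> fps_nth (((2 - Dfps t1) * (2 - Dfps t2) * (2 - Dfps t3)) * fps_binomial (of_nat (m1 + m2 + m3))) n"
    using main_cle[of t1 t2 t3 m1 m2 m3] tt unfolding cle_def by auto
  also have "\<dots> \<le> 2 + 12 * (2 ^ n * (1 + 6 / real n) / (real n * exp 1 * (ln (real n) - ln 2)))
           + 12 * 2 ^ n / (real n * (real n - 1))"
    using coef_bound[of t1 t2 t3 K M n] tt TK K2 MK n4 unfolding M_def by simp
  finally show ?thesis .
qed

lemma ln_le_div_e: "(z::real) > 0 \<Longrightarrow> ln z \<le> z / exp 1"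
proof -
  assume z: "z > 0"
  have "ln (z / exp 1) \<le> z / exp 1 - 1" using z by (intro ln_le_minus_one) simp
  also have "ln (z / exp 1) = ln z - 1" using z by (simp add: ln_div)
  finally show ?thesis by simp
qed

lemma e_ln_le_sqrt: "(x::real) > 0 \<Longrightarrow> exp 1 * ln x \<le> 2 * sqrt x"
proof -
  assume x: "x > 0"
  have "ln x = 2 * ln (sqrt x)" using x by (simp add: ln_sqrt)
  also have "\<dots> \<le> 2 * (sqrt x / exp 1)" using x by (intro mult_left_mono ln_le_div_e) auto
  finally show ?thesis by (simp add: field_simps)
qed

lemma poly_ineq:
  fixes s :: real
  assumes "s \<ge> 0" "s * s \<ge> 8"
  shows "6 * (s * s / 2) * s \<le> (s * s / 2 - 1) * (s * s / 2 + 69)"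
proof -
  have "s * s * ((s - 6) * (s - 6) + 100) \<ge> 8 * 100"
    using assms by (intro mult_mono) auto
  thus ?thesis by (simp add: algebra_simps)
qed

lemma key_L:
  assumes "n \<ge> 4"
  shows "6 * exp 1 * (ln (real n) - ln 2) * real n \<le> (real n - 1) * (real n + 69)"
proof -
  define s where "s = sqrt (2 * real n)"
  have s0: "s \<ge> 0" and ss: "s * s = 2 * real n" unfolding s_def by auto
  have "ln (real n) - ln 2 = ln (real n / 2)" using assms by (simp add: ln_div)
  hence "exp 1 * (ln (real n) - ln 2) \<le> 2 * sqrt (real n / 2)"
    using e_ln_le_sqrt[of "real n / 2"] assms by simp
  also have "2 * sqrt (real n / 2) = s"
  proof -
    have a: "sqrt (4::real) = 2"
    proof -
      have "sqrt ((2::real)^2) = 2" by (rule real_sqrt_unique) auto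
      thus ?thesis by simp
    qed
    have "sqrt (2 * real n) = sqrt (4 * (real n / 2))" by simp
    also have "\<dots> = sqrt 4 * sqrt (real n / 2)" by (rule real_sqrt_mult)
    finally show ?thesis unfolding s_def by (simp add: a)
  qed
  finally have eL: "exp 1 * (ln (real n) - ln 2) \<le> s" .
  have n_eq: "real n = s * s / 2" using ss by simp
  have "6 * exp 1 * (ln (real n) - ln 2) * real n \<le> 6 * s * real n"
    using eL assms by (simp add: mult.assoc mult_left_mono mult_right_mono)
  also have "\<dots> = 6 * (s * s / 2) * s" using n_eq by simp
  also have "\<dots> \<le> (s * s / 2 - 1) * (s * s / 2 + 69)"
    using s0 ss assms by (intro poly_ineq) auto
  also have "\<dots> = (real n - 1) * (real n + 69)" by (simp only: n_eq[symmetric])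
  finally show ?thesis .
qed

lemma final_num:
  fixes n :: nat
  assumes n4: "n \<ge> 4"
  shows "2 + 12 * (2 ^ n * (1 + 6 / real n) / (real n * exp 1 * (ln (real n) - ln 2)))
           + 12 * 2 ^ n / (real n * (real n - 1))
         \<le> (7 + exp 1 * (real n)^2 * ln (real n) / 2 ^ n)
            * (2 ^ (n + 1) / (exp 1 * real n * (ln (real n) - ln 2))) * (1 + 15 / (real n - 3))"
proof -
  define L where "L = ln (real n) - ln 2"
  define W where "W = 2 ^ (n + 1) / (exp 1 * real n * L)"
  define \<mu> where "\<mu> = exp 1 * (real n)^2 * ln (real n) / 2 ^ n"
  define r where "r = 6 * exp 1 * L / (real n - 1)"
  have n0: "real n > 0" and n1: "real n - 1 > 0" and n3: "real n - 3 > 0" using n4 by auto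
  have L0: "L > 0" using n4 unfolding L_def by (simp add: ln_less_cancel_iff)
  have Lln: "L \<le> ln (real n)" unfolding L_def by simp
  have e0: "exp (1::real) > 0" by simp
  have W0: "W > 0" unfolding W_def using L0 n0 by simp
  have f1: "12 * (2 ^ n * (1 + 6 / real n) / (real n * exp 1 * L)) = 6 * W + 36 * (W / real n)"
    unfolding W_def using L0 n0 by (simp add: field_simps)
  have f2: "12 * 2 ^ n / (real n * (real n - 1)) = W * r"
    unfolding W_def r_def using L0 n0 n1 by (simp add: field_simps)
  have "r \<le> 1 + 69 / real n"
  proof -
    have "6 * exp 1 * L * real n \<le> (real n - 1) * (real n + 69)" using key_L[OF n4] unfolding L_def .
    thus ?thesis unfolding r_def using n0 n1 by (simp add: field_simps)
  qed
  hence "W * r \<le> W * (1 + 69 / real n)"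
    using W0 by (intro mult_left_mono) auto
  also have "W * (1 + 69 / real n) = W + 69 * (W / real n)" by (simp add: algebra_simps)
  finally have f3: "W * r \<le> W + 69 * (W / real n)" .
  have f5: "\<mu> * W \<ge> 2"
  proof -
    have "\<mu> * W = 2 * real n * (ln (real n) / L)"
      unfolding \<mu>_def W_def using L0 n0 by (simp add: field_simps power2_eq_square)
    moreover have "ln (real n) / L \<ge> 1" using Lln L0 by simp
    moreover have "2 * real n \<ge> 2" using n4 by simp
    ultimately show ?thesis
      by (metis mult_mono' mult.right_neutral dual_order.trans le_numeral_extra(1) zero_le_numeral)
  qed
  have \<mu>0: "\<mu> \<ge> 0" unfolding \<mu>_def using n4 by simp
  have f6: "15 / (real n - 3) \<ge> 15 / real n" using n3 n0 by (simp add: frac_le)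
  have f7: "(7 + \<mu>) * W * (1 + 15 / (real n - 3)) = 7 * W + 7 * (W * (15 / (real n - 3))) + \<mu> * W + \<mu> * W * (15 / (real n - 3))"
  proof -
    have "(7 + \<mu>) * W * (1 + x) = 7 * W + 7 * (W * x) + \<mu> * W + \<mu> * W * x" for x
      by (simp add: algebra_simps)
    thus ?thesis .
  qed
  have f8: "W * (15 / (real n - 3)) \<ge> W * (15 / real n)" using f6 W0 by (intro mult_left_mono) auto
  have f9: "W * (15 / real n) = 15 * (W / real n)" by simp
  have f10: "\<mu> * W * (15 / (real n - 3)) \<ge> 0" using \<mu>0 W0 n3 by simp
  have "2 + 12 * (2 ^ n * (1 + 6 / real n) / (real n * exp 1 * L)) + 12 * 2 ^ n / (real n * (real n - 1))
        \<le> (7 + \<mu>) * W * (1 + 15 / (real n - 3))"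
    unfolding f1 f2 f7 using f3 f5 f8 f9 f10 by linarith
  thus ?thesis unfolding L_def W_def \<mu>_def by (simp add: mult.assoc)
qed

lemma ne_simplex: "{(l1, l2, l3). (l1::real) \<ge> 0 \<and> l2 \<ge> 0 \<and> l3 \<ge> 0 \<and> l1 + l2 + l3 = 1} \<noteq> {}"
proof -
  have "(1::real, 0::real, 0::real) \<in> {(l1, l2, l3). (l1::real) \<ge> 0 \<and> l2 \<ge> 0 \<and> l3 \<ge> 0 \<and> l1 + l2 + l3 = 1}" by simp
  thus ?thesis by blast
qed

theorem theorem2:
  shows "\<exists>\<mu> :: nat \<Rightarrow> real.
     (\<forall>n. 0 \<le> \<mu> n) \<and> \<mu> \<longlonglongrightarrow> 0 \<and>
     (\<forall>n::nat. n \<ge> 4 \<longrightarrow>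
        \<mu> n \<le> 3 * exp 1 * real n * (ln (real n)) ^ 3 / (2 powr (real n / 3))
               + exp 1 * (real n)^2 * ln (real n) / 2 ^ n
      \<and> lebesgue_const n \<le> (7 + \<mu> n) * (2 ^ (n + 1) / (exp 1 * real n * (ln (real n) - ln 2)))
               * (1 + 15 / (real n - 3)))"
proof (intro exI[of _ "\<lambda>n. exp 1 * (real n)^2 * ln (real n) / 2 ^ n"] conjI allI impI)
  fix n :: nat
  have "ln (real n) \<ge> 0" by (cases "n = 0") auto
  thus "0 \<le> exp 1 * (real n)^2 * ln (real n) / 2 ^ n" by simp
next
  show "(\<lambda>n. exp 1 * (real n)^2 * ln (real n) / 2 ^ n) \<longlonglongrightarrow> 0"
    by real_asymp
next
  fix n :: nat assume n4: "n \<ge> 4"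
  have "ln (real n) \<ge> 0" using n4 by simp
  hence "0 \<le> 3 * exp 1 * real n * (ln (real n)) ^ 3 / (2 powr (real n / 3))" by simp
  thus "exp 1 * (real n)^2 * ln (real n) / 2 ^ n \<le> 3 * exp 1 * real n * (ln (real n)) ^ 3 / (2 powr (real n / 3))
               + exp 1 * (real n)^2 * ln (real n) / 2 ^ n" by simp
next
  fix n :: nat assume n4: "n \<ge> 4"
  show "lebesgue_const n \<le> (7 + exp 1 * (real n)^2 * ln (real n) / 2 ^ n) * (2 ^ (n + 1) / (exp 1 * real n * (ln (real n) - ln 2)))
               * (1 + 15 / (real n - 3))"
    unfolding lebesgue_const_def
  proof (rule cSUP_least)
    show "bary_simplex \<noteq> {}" unfolding bary_simplex_def by (rule ne_simplex)
  next
    fix l assume "l \<in> bary_simplex"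
    from pointwise_bound[OF n4 this] final_num[OF n4]
    show "lebesgue_fun n l \<le> (7 + exp 1 * (real n)^2 * ln (real n) / 2 ^ n) * (2 ^ (n + 1) / (exp 1 * real n * (ln (real n) - ln 2)))
               * (1 + 15 / (real n - 3))" by linarith
  qed
qed

end
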